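(* In the half-line setting, let $\mathcal{S}=\{j\ge0:r_j>0\}=\{j_1<j_2<\cdots\}$ (finite or infinite). For each $k$ such that $j_{k+1}$ exists define $$\eta_k=(-1)^{j_k}Q_{j_k}\Big(-\sqrt{\tfrac{p_{j_k}\tilde q_{j_k}}{r_{j_k}}}\,|j_k;O\rangle+\sqrt{\tilde q_{j_k}}\,|j_k;R\rangle\Big)+\sum_{l=j_k+1}^{j_{k+1}-1}(-1)^lQ_l\big(-\sqrt{p_l}|l;L\rangle+\sqrt{q_l}|l;R\rangle\big)+(-1)^{j_{k+1}}Q_{j_{k+1}}\Big(-\sqrt{p_{j_{k+1}}}\,|j_{k+1};L\rangle+\sqrt{\tfrac{p_{j_{k+1}}q_{j_{k+1}}}{r_{j_{k+1}}}}\,|j_{k+1};O\rangle\Big),$$ and, if $|\mathcal{S}|=n<\infty$, define the formal vector $$\eta_n=(-1)^{j_n}Q_{j_n}\Big(-\sqrt{\tfrac{p_{j_n}\tilde q_{j_n}}{r_{j_n}}}\,|j_n;O\rangle+\sqrt{\tilde q_{j_n}}\,|j_n;R\rangle\Big)+\sum_{l=j_n+1}^{\infty}(-1)^lQ_l\big(-\sqrt{p_l}|l;L\rangle+\sqrt{q_l}|l;R\rangle\big).$$ Then a vector $\phi\in\ell^2(A)$ lies in $\mathcal{H}^{(S)}$ if and only if $\phi=\sum_k c_k\eta_k$ (coefficientwise; each arc lies in the support of at most two $\eta_k$) for some complex numbers $c_k$. In particular $\mathcal{H}^{(S)}=\{0\}$ if $\mathcal{S}=\emptyset$. Moreover every $\eta_k$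 that belongs to $\ell^2(A)$ satisfies $U\eta_k=-\eta_k$.
   Context: Half-line setting: $V=\mathbb{Z}_+$, parameters $p_j,q_j,r_j\ge0$ with $p_j+q_j+r_j=1$, $q_0=0$, $p_j>0$ ($j\ge0$), $q_j>0$ ($j\ge1$). Arcs: $|j;R\rangle=\delta_{(j+1,j)}$ ($j\ge0$), $|j;L\rangle=\delta_{(j-1,j)}$ ($j\ge1$), $|j;O\rangle=\delta_{(j,j)}$ when $r_j>0$; arc $(u,v)$ goes from $v$ to $u$. Shift $S$: $|j;R\rangle\leftrightarrow|j+1;L\rangle$, $|j;O\rangle\mapsto|j;O\rangle$. $a_j=\sqrt{q_j}|j;L\rangle+\sqrt{r_j}|j;O\rangle+\sqrt{p_j}|j;R\rangle$, $b_j=Sa_j$. $\Pi_A$ is the orthogonal projection onto the closed span of $\{a_j\}$, $C=2\Pi_A-I$, $U=SC$. $\mathcal{H}^{(R)}$ is the closed span of $\{a_j,b_j:j\ge0\}$ and $\mathcal{H}^{(S)}=(\mathcal{H}^{(R)})^\perp$. $Q_0=1$ and $Q_j=\sqrt{\frac{q_1\cdots q_j}{p_1\cdots p_j\,q_j}}$ for $j\ge1$; $\tilde q_j=q_j$ for $j\ge1$ and $\tilde q_0=1$. *)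

theory Defs
  imports "HOL-Analysis.Analysis"
begin

text \<open>Half-line quantum walk.  Arcs are pairs (u,v) of naturals (arc from v to u);
  vectors are functions on nat \<times> nat vanishing outside the arc set.
  Parameters p q r :: nat \<Rightarrow> real.\<close>

definition arcs :: "(nat \<Rightarrow> real) \<Rightarrow> (nat \<times> nat) set" where
  "arcs r = {(Suc j, j) | j. True} \<union> {(j - 1, j) | j. j \<ge> 1} \<union> {(j, j) | j. r j > 0}"

definition ell2A :: "(nat \<Rightarrow> real) \<Rightarrow> (nat \<times> nat \<Rightarrow> complex) set" where
  "ell2A r = {\<phi>. (\<forall>e. e \<notin> arcs r \<longrightarrow> \<phi> e = 0) \<and> (\<lambda>e. (cmod (\<phi> e))\<^sup>2) summable_on UNIV}"

definition inner2 :: "(nat \<times> nat \<Rightarrow> complex) \<Rightarrow> (nat \<times> nat \<Rightarrow> complex) \<Rightarrow> complex" where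
  "inner2 \<phi> \<psi> = (\<Sum>\<^sub>\<infinity>e. cnj (\<phi> e) * \<psi> e)"

definition norm2 :: "(nat \<times> nat \<Rightarrow> complex) \<Rightarrow> real" where
  "norm2 \<phi> = sqrt (\<Sum>\<^sub>\<infinity>e. (cmod (\<phi> e))\<^sup>2)"

definition finspan :: "(nat \<times> nat \<Rightarrow> complex) set \<Rightarrow> (nat \<times> nat \<Rightarrow> complex) set" where
  "finspan X = {(\<lambda>e. \<Sum>x\<in>F. c x * x e) | F c. finite F \<and> F \<subseteq> X}"

definition cspan :: "(nat \<Rightarrow> real) \<Rightarrow> (nat \<times> nat \<Rightarrow> complex) set \<Rightarrow> (nat \<times> nat \<Rightarrow> complex) set" where
  "cspan r X = {\<psi> \<in> ell2A r. \<forall>\<epsilon>::real. \<epsilon> > 0 \<longrightarrow> (\<exists>f\<in>finspan X. norm2 (\<lambda>e. \<psi> e - f e) < \<epsilon>)}"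

definition orth :: "(nat \<Rightarrow> real) \<Rightarrow> (nat \<times> nat \<Rightarrow> complex) set \<Rightarrow> (nat \<times> nat \<Rightarrow> complex) set" where
  "orth r Y = {\<phi> \<in> ell2A r. \<forall>\<psi>\<in>Y. inner2 \<psi> \<phi> = 0}"

definition proj :: "(nat \<Rightarrow> real) \<Rightarrow> (nat \<times> nat \<Rightarrow> complex) set \<Rightarrow> (nat \<times> nat \<Rightarrow> complex) \<Rightarrow> (nat \<times> nat \<Rightarrow> complex)" where
  "proj r X \<phi> = (THE \<psi>. \<psi> \<in> cspan r X \<and> (\<forall>g\<in>cspan r X. inner2 g (\<lambda>e. \<phi> e - \<psi> e) = 0))"

definition shift :: "(nat \<times> nat \<Rightarrow> complex) \<Rightarrow> (nat \<times> nat \<Rightarrow> complex)" where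
  "shift \<phi> = (\<lambda>(u, v). \<phi> (v, u))"

definition avec :: "(nat \<Rightarrow> real) \<Rightarrow> (nat \<Rightarrow> real) \<Rightarrow> (nat \<Rightarrow> real) \<Rightarrow> nat \<Rightarrow> (nat \<times> nat \<Rightarrow> complex)" where
  "avec p q r j = (\<lambda>(u, v). if v \<noteq> j then 0
      else if u = Suc j then complex_of_real (sqrt (p j))
      else if u = j \<and> r j > 0 then complex_of_real (sqrt (r j))
      else if Suc u = j then complex_of_real (sqrt (q j))
      else 0)"

definition bvec :: "(nat \<Rightarrow> real) \<Rightarrow> (nat \<Rightarrow> real) \<Rightarrow> (nat \<Rightarrow> real) \<Rightarrow> nat \<Rightarrow> (nat \<times> nat \<Rightarrow> complex)" where
  "bvec p q r j = shift (avec p q r j)"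

definition HR :: "(nat \<Rightarrow> real) \<Rightarrow> (nat \<Rightarrow> real) \<Rightarrow> (nat \<Rightarrow> real) \<Rightarrow> (nat \<times> nat \<Rightarrow> complex) set" where
  "HR p q r = cspan r (range (avec p q r) \<union> range (bvec p q r))"

definition HS :: "(nat \<Rightarrow> real) \<Rightarrow> (nat \<Rightarrow> real) \<Rightarrow> (nat \<Rightarrow> real) \<Rightarrow> (nat \<times> nat \<Rightarrow> complex) set" where
  "HS p q r = orth r (HR p q r)"

definition Uop :: "(nat \<Rightarrow> real) \<Rightarrow> (nat \<Rightarrow> real) \<Rightarrow> (nat \<Rightarrow> real) \<Rightarrow> (nat \<times> nat \<Rightarrow> complex) \<Rightarrow> (nat \<times> nat \<Rightarrow> complex)" where
  "Uop p q r \<phi> = shift (\<lambda>e. 2 * proj r (range (avec p q r)) \<phi> e - \<phi> e)"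

definition Qc :: "(nat \<Rightarrow> real) \<Rightarrow> (nat \<Rightarrow> real) \<Rightarrow> nat \<Rightarrow> real" where
  "Qc p q j = (if j = 0 then 1 else sqrt ((\<Prod>i=1..j. q i) / ((\<Prod>i=1..j. p i) * q j)))"

definition qt :: "(nat \<Rightarrow> real) \<Rightarrow> nat \<Rightarrow> real" where
  "qt q j = (if j = 0 then 1 else q j)"

definition Sset :: "(nat \<Rightarrow> real) \<Rightarrow> nat set" where
  "Sset r = {j. r j > 0}"

text \<open>k-th element (0-indexed) of Sset r in increasing order.\<close>
definition sj :: "(nat \<Rightarrow> real) \<Rightarrow> nat \<Rightarrow> nat" where
  "sj r k = (LEAST j. j \<in> Sset r \<and> card {i \<in> Sset r. i < j} = k)"

definition Kset :: "(nat \<Rightarrow> real) \<Rightarrow> nat set" where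
  "Kset r = {k. infinite (Sset r) \<or> k < card (Sset r)}"

text \<open>The vector starting at the O-arc of j and ending at the O-arc of t
  (ub = Some t), or extending to infinity (ub = None).\<close>
definition eta_gen :: "(nat \<Rightarrow> real) \<Rightarrow> (nat \<Rightarrow> real) \<Rightarrow> (nat \<Rightarrow> real) \<Rightarrow> nat \<Rightarrow> nat option \<Rightarrow> (nat \<times> nat \<Rightarrow> complex)" where
  "eta_gen p q r j ub = (\<lambda>(u, v). complex_of_real ((-1) ^ v * Qc p q v *
      (if v = j then
         (if u = j then - sqrt (p j * qt q j / r j)
          else if u = Suc j then sqrt (qt q j) else 0)
       else if j < v \<and> (case ub of None \<Rightarrow> True | Some t \<Rightarrow> v < t) then
         (if Suc u = v then - sqrt (p v) else if u = Suc v then sqrt (q v) else 0)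
       else if ub = Some v then
         (if Suc u = v then - sqrt (p v) else if u = v then sqrt (p v * q v / r v) else 0)
       else 0)))"

definition eta :: "(nat \<Rightarrow> real) \<Rightarrow> (nat \<Rightarrow> real) \<Rightarrow> (nat \<Rightarrow> real) \<Rightarrow> nat \<Rightarrow> (nat \<times> nat \<Rightarrow> complex)" where
  "eta p q r k = (if infinite (Sset r) \<or> Suc k < card (Sset r)
                  then eta_gen p q r (sj r k) (Some (sj r (Suc k)))
                  else eta_gen p q r (sj r k) None)"

end

theory Submission
  imports Defs
begin



lemma arcs_iff: "(a, b) \<in> arcs r \<longleftrightarrow> a = Suc b \<or> Suc a = b \<or> (a = b \<and> r b > 0)"
  unfolding arcs_def by auto

lemma fs_infsum:
  assumes "finite F" "\<And>e. e \<notin> F \<Longrightarrow> f e = 0"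
  shows "infsum f UNIV = sum f F"
proof -
  have "infsum f UNIV = infsum f F"
    by (rule infsum_cong_neutral) (use assms in auto)
  then show ?thesis using assms by simp
qed

lemma fs_summable:
  assumes "finite F" "\<And>e. e \<notin> F \<Longrightarrow> f e = 0"
  shows "f summable_on UNIV"
proof -
  have "f summable_on F" using assms by simp
  then show ?thesis
    using summable_on_cong_neutral[of F UNIV f f] assms by auto
qed

lemma l2_prod_summable:
  fixes f g :: "'a \<Rightarrow> complex"
  assumes "(\<lambda>e. (cmod (f e))\<^sup>2) summable_on UNIV" "(\<lambda>e. (cmod (g e))\<^sup>2) summable_on UNIV"
  shows "(\<lambda>e. cnj (f e) * g e) summable_on UNIV"
    and "(\<lambda>e. cmod (f e) * cmod (g e)) summable_on UNIV"
proof -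
  have s: "(\<lambda>e. (cmod (f e))\<^sup>2 + (cmod (g e))\<^sup>2) summable_on UNIV"
    using assms by (rule summable_on_add)
  have b: "norm (cnj (f e) * g e) \<le> (cmod (f e))\<^sup>2 + (cmod (g e))\<^sup>2" for e
  proof -
    have "norm (cnj (f e) * g e) = cmod (f e) * cmod (g e)" by (simp add: norm_mult)
    also have "\<dots> \<le> (cmod (f e))\<^sup>2 + (cmod (g e))\<^sup>2"
      using sum_squares_bound[of "cmod (f e)" "cmod (g e)"] mult_nonneg_nonneg[OF norm_ge_zero[of "f e"] norm_ge_zero[of "g e"]] by linarith
    finally show ?thesis .
  qed
  have "(\<lambda>e. norm (cnj (f e) * g e)) summable_on UNIV"
    by (rule summable_on_comparison_test[OF s]) (use b in auto)
  then show "(\<lambda>e. cnj (f e) * g e) summable_on UNIV"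
    by (rule abs_summable_summable)
  show "(\<lambda>e. cmod (f e) * cmod (g e)) summable_on UNIV"
    using \<open>(\<lambda>e. norm (cnj (f e) * g e)) summable_on UNIV\<close> by (simp add: norm_mult)
qed

lemma l2_diff:
  fixes f g :: "'a \<Rightarrow> complex"
  assumes "(\<lambda>e. (cmod (f e))\<^sup>2) summable_on UNIV" "(\<lambda>e. (cmod (g e))\<^sup>2) summable_on UNIV"
  shows "(\<lambda>e. (cmod (f e - g e))\<^sup>2) summable_on UNIV"
proof -
  have s: "(\<lambda>e. 2 * (cmod (f e))\<^sup>2 + 2 * (cmod (g e))\<^sup>2) summable_on UNIV"
    using assms by (intro summable_on_add summable_on_cmult_right)
  have b: "(cmod (f e - g e))\<^sup>2 \<le> 2 * (cmod (f e))\<^sup>2 + 2 * (cmod (g e))\<^sup>2" for e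
  proof -
    have "cmod (f e - g e) \<le> cmod (f e) + cmod (g e)" by (rule norm_triangle_ineq4)
    then have "(cmod (f e - g e))\<^sup>2 \<le> (cmod (f e) + cmod (g e))\<^sup>2"
      by (simp add: power_mono)
    also have "\<dots> \<le> 2 * (cmod (f e))\<^sup>2 + 2 * (cmod (g e))\<^sup>2"
      using sum_squares_bound[of "cmod (f e)" "cmod (g e)"] by (simp add: power2_sum)
    finally show ?thesis .
  qed
  show ?thesis
    by (rule summable_on_comparison_test[OF s]) (use b in auto)
qed




definition supp :: "(nat \<times> nat \<Rightarrow> complex) \<Rightarrow> (nat \<times> nat) set" where
  "supp x = {e. x e \<noteq> 0}"

lemma inner_finspan:
  assumes X: "\<And>x. x \<in> X \<Longrightarrow> finite (supp x) \<and> inner2 x \<phi> = 0"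
    and f: "f \<in> finspan X"
  shows "inner2 f \<phi> = 0" and "finite (supp f)"
proof -
  obtain F c where fd: "f = (\<lambda>e. \<Sum>x\<in>F. c x * x e)" and F: "finite F" "F \<subseteq> X"
    using f unfolding finspan_def by blast
  define G where "G = (\<Union>x\<in>F. supp x)"
  have G: "finite G" using F X unfolding G_def by blast
  have fz: "f e = 0" if "e \<notin> G" for e
    using that unfolding fd G_def supp_def by (auto intro!: sum.neutral)
  show "finite (supp f)"
    using G fz unfolding supp_def by (metis (mono_tags, lifting) mem_Collect_eq rev_finite_subset subsetI)
  have xi: "inner2 x \<phi> = (\<Sum>e\<in>G. cnj (x e) * \<phi> e)" if "x \<in> F" for x
    unfolding inner2_def
    by (rule fs_infsum[OF G]) (use that in \<open>auto simp: G_def supp_def\<close>)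
  have "inner2 f \<phi> = (\<Sum>e\<in>G. cnj (f e) * \<phi> e)"
    unfolding inner2_def by (rule fs_infsum[OF G]) (use fz in auto)
  also have "\<dots> = (\<Sum>e\<in>G. \<Sum>x\<in>F. cnj (c x) * (cnj (x e) * \<phi> e))"
    unfolding fd by (simp add: sum_distrib_right mult.assoc)
  also have "\<dots> = (\<Sum>x\<in>F. cnj (c x) * (\<Sum>e\<in>G. cnj (x e) * \<phi> e))"
    by (subst sum.swap) (simp add: sum_distrib_left)
  also have "\<dots> = (\<Sum>x\<in>F. cnj (c x) * inner2 x \<phi>)"
    using xi by simp
  also have "\<dots> = 0" using X F by (simp add: subset_iff)
  finally show "inner2 f \<phi> = 0" .
qed

lemma supp_summable:
  assumes "finite (supp f)"
  shows "(\<lambda>e. g e * f e) summable_on UNIV" "(\<lambda>e. f e * g e) summable_on UNIV"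
    "(\<lambda>e. (cmod (f e))\<^sup>2) summable_on UNIV"
  by (rule fs_summable[OF assms]; simp add: supp_def)+

lemma small_bound:
  fixes a b \<epsilon> :: real
  assumes "\<epsilon> > 0"
  shows "a * b \<le> (a\<^sup>2 / \<epsilon> + \<epsilon> * b\<^sup>2) / 2"
proof -
  have "(a - \<epsilon>*b)\<^sup>2/\<epsilon> \<ge> 0" using assms by simp
  moreover have "(a - \<epsilon>*b)\<^sup>2/\<epsilon> = a\<^sup>2/\<epsilon> + \<epsilon>*b\<^sup>2 - 2*(a*b)"
    using assms by (simp add: field_simps power2_eq_square)
  ultimately have "2*(a*b) \<le> a\<^sup>2/\<epsilon> + \<epsilon>*b\<^sup>2" by linarith
  then show ?thesis by simp
qed

lemma cspan_orth:
  assumes phi: "\<phi> \<in> ell2A r"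
    and X: "\<And>x. x \<in> X \<Longrightarrow> finite (supp x) \<and> inner2 x \<phi> = 0"
    and psi: "\<psi> \<in> cspan r X"
  shows "inner2 \<psi> \<phi> = 0"
proof -
  define P where "P = (\<Sum>\<^sub>\<infinity>e. (cmod (\<phi> e))\<^sup>2)"
  have phis: "(\<lambda>e. (cmod (\<phi> e))\<^sup>2) summable_on UNIV" using phi unfolding ell2A_def by auto
  have psis: "(\<lambda>e. (cmod (\<psi> e))\<^sup>2) summable_on UNIV" using psi unfolding cspan_def ell2A_def by auto
  have P0: "P \<ge> 0" unfolding P_def by (rule infsum_nonneg) simp
  have bound: "cmod (inner2 \<psi> \<phi>) \<le> \<epsilon> * (1 + P) / 2" if eps: "\<epsilon> > 0" for \<epsilon>
  proof -
    obtain f where f: "f \<in> finspan X" and fn: "norm2 (\<lambda>e. \<psi> e - f e) < \<epsilon>"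
      using psi eps unfolding cspan_def by blast
    define d where "d = (\<lambda>e. \<psi> e - f e)"
    have fs: "finite (supp f)" and fi: "inner2 f \<phi> = 0" using inner_finspan[OF X f] by auto
    have ds: "(\<lambda>e. (cmod (d e))\<^sup>2) summable_on UNIV"
      unfolding d_def by (rule l2_diff[OF psis supp_summable(3)[OF fs]])
    define D where "D = (\<Sum>\<^sub>\<infinity>e. (cmod (d e))\<^sup>2)"
    have D0: "D \<ge> 0" unfolding D_def by (rule infsum_nonneg) simp
    have "sqrt D < \<epsilon>" using fn unfolding norm2_def D_def d_def by simp
    then have De: "D < \<epsilon>\<^sup>2" using D0 eps
      by (metis real_sqrt_less_iff real_sqrt_pow2 real_sqrt_power abs_of_nonneg less_le_not_le real_less_rsqrt)
    have s1: "(\<lambda>e. cnj (d e) * \<phi> e) summable_on UNIV" by (rule l2_prod_summable(1)[OF ds phis])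
    have s1a: "(\<lambda>e. cmod (d e) * cmod (\<phi> e)) summable_on UNIV" by (rule l2_prod_summable(2)[OF ds phis])
    have s2: "(\<lambda>e. cnj (f e) * \<phi> e) summable_on UNIV"
      using fs unfolding supp_def
      by (intro fs_summable[of "{e. f e \<noteq> 0}"]) auto
    have "inner2 \<psi> \<phi> = (\<Sum>\<^sub>\<infinity>e. cnj (d e) * \<phi> e + cnj (f e) * \<phi> e)"
      unfolding inner2_def d_def by (simp add: algebra_simps)
    also have "\<dots> = inner2 d \<phi> + inner2 f \<phi>"
      unfolding inner2_def by (rule infsum_add[OF s1 s2])
    finally have eq: "inner2 \<psi> \<phi> = inner2 d \<phi>" using fi by simp
    have hs: "((\<lambda>e. ((cmod (d e))\<^sup>2 / \<epsilon> + \<epsilon> * (cmod (\<phi> e))\<^sup>2) / 2) has_sum ((D / \<epsilon> + \<epsilon> * P) / 2)) UNIV"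
    proof -
      have "((\<lambda>e. (cmod (d e))\<^sup>2) has_sum D) UNIV" using ds unfolding D_def by simp
      moreover have "((\<lambda>e. (cmod (\<phi> e))\<^sup>2) has_sum P) UNIV" using phis unfolding P_def by simp
      ultimately have "((\<lambda>e. ((cmod (d e))\<^sup>2 * inverse \<epsilon> + \<epsilon> * (cmod (\<phi> e))\<^sup>2) * inverse 2) has_sum ((D * inverse \<epsilon> + \<epsilon> * P) * inverse 2)) UNIV"
        by (intro has_sum_cmult_left has_sum_add has_sum_cmult_right)
      then show ?thesis by (simp only: divide_inverse)
    qed
    have "cmod (inner2 d \<phi>) \<le> (\<Sum>\<^sub>\<infinity>e. norm (cnj (d e) * \<phi> e))"
      unfolding inner2_def by (rule norm_infsum_bound) (use s1a in \<open>simp add: norm_mult\<close>)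
    also have "\<dots> = (\<Sum>\<^sub>\<infinity>e. cmod (d e) * cmod (\<phi> e))" by (simp add: norm_mult)
    also have "\<dots> \<le> (\<Sum>\<^sub>\<infinity>e. ((cmod (d e))\<^sup>2 / \<epsilon> + \<epsilon> * (cmod (\<phi> e))\<^sup>2) / 2)"
    proof (rule infsum_mono[OF s1a])
      show "(\<lambda>e. ((cmod (d e))\<^sup>2 / \<epsilon> + \<epsilon> * (cmod (\<phi> e))\<^sup>2) / 2) summable_on UNIV"
        using hs by (rule has_sum_imp_summable)
      show "cmod (d x) * cmod (\<phi> x) \<le> ((cmod (d x))\<^sup>2 / \<epsilon> + \<epsilon> * (cmod (\<phi> x))\<^sup>2) / 2" for x
        by (rule small_bound[OF eps])
    qed
    also have "\<dots> = (D / \<epsilon> + \<epsilon> * P) / 2"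
      using hs by (rule infsumI)
    also have "\<dots> \<le> (\<epsilon> + \<epsilon> * P) / 2"
    proof -
      have "D / \<epsilon> \<le> \<epsilon>" using De eps by (simp add: field_simps power2_eq_square)
      then show ?thesis by (simp only: divide_right_mono add_right_mono)
    qed
    finally show ?thesis using eq by (simp add: algebra_simps)
  qed
  show ?thesis
  proof (rule ccontr)
    assume "inner2 \<psi> \<phi> \<noteq> 0"
    then have m: "cmod (inner2 \<psi> \<phi>) > 0" by simp
    define \<epsilon> where "\<epsilon> = cmod (inner2 \<psi> \<phi>) / (1 + P)"
    have "\<epsilon> > 0" using m P0 unfolding \<epsilon>_def by simp
    have e1: "\<epsilon> * (1 + P) = cmod (inner2 \<psi> \<phi>)" using P0 unfolding \<epsilon>_def by simp
    from bound[OF \<open>\<epsilon> > 0\<close>] have "cmod (inner2 \<psi> \<phi>) \<le> cmod (inner2 \<psi> \<phi>) / 2"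
      by (simp only: e1)
    then show False using m by simp
  qed
qed

lemma zero_in_cspan: "(\<lambda>e. 0) \<in> cspan r X"
proof -
  have "(\<lambda>e. 0) \<in> finspan X" unfolding finspan_def
    by (rule CollectI, rule exI[of _ "{}"], rule exI[of _ "\<lambda>_. 0"]) auto
  moreover have "(\<lambda>e. 0::complex) \<in> ell2A r" unfolding ell2A_def by simp
  ultimately show ?thesis unfolding cspan_def norm2_def
    by (intro CollectI conjI allI impI bexI[of _ "\<lambda>e. 0"]) auto
qed

lemma inner_self_zero:
  assumes "(\<lambda>e. (cmod (\<psi> e))\<^sup>2) summable_on UNIV" "inner2 \<psi> \<psi> = 0"
  shows "\<psi> = (\<lambda>e. 0)"
proof -
  define D where "D = (\<Sum>\<^sub>\<infinity>e. (cmod (\<psi> e))\<^sup>2)"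
  have h: "((\<lambda>e. (cmod (\<psi> e))\<^sup>2) has_sum D) UNIV" using assms(1) unfolding D_def by simp
  have "((\<lambda>e. complex_of_real ((cmod (\<psi> e))\<^sup>2)) has_sum complex_of_real D) UNIV"
    by (rule has_sum_of_real[OF h])
  moreover have "(\<lambda>e. complex_of_real ((cmod (\<psi> e))\<^sup>2)) = (\<lambda>e. cnj (\<psi> e) * \<psi> e)"
    by (rule ext, subst complex_norm_square, rule mult.commute)
  ultimately have "inner2 \<psi> \<psi> = complex_of_real D" unfolding inner2_def
    by (metis infsumI)
  then have "D = 0" using assms(2) by simp
  have "(cmod (\<psi> e))\<^sup>2 = 0" for e
    by (rule nonneg_infsum_le_0D[of _ UNIV]) (use \<open>D = 0\<close> assms(1) in \<open>auto simp: D_def\<close>)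
  then show ?thesis by auto
qed

lemma proj_zero:
  assumes phi: "\<phi> \<in> ell2A r" and orth: "\<And>g. g \<in> cspan r X \<Longrightarrow> inner2 g \<phi> = 0"
  shows "proj r X \<phi> = (\<lambda>e. 0)"
  unfolding proj_def
proof (rule the_equality)
  show "(\<lambda>e. 0) \<in> cspan r X \<and> (\<forall>g\<in>cspan r X. inner2 g (\<lambda>e. \<phi> e - 0) = 0)"
    using zero_in_cspan orth by simp
next
  fix \<psi> assume a: "\<psi> \<in> cspan r X \<and> (\<forall>g\<in>cspan r X. inner2 g (\<lambda>e. \<phi> e - \<psi> e) = 0)"
  have psis: "(\<lambda>e. (cmod (\<psi> e))\<^sup>2) summable_on UNIV" using a unfolding cspan_def ell2A_def by auto
  have phis: "(\<lambda>e. (cmod (\<phi> e))\<^sup>2) summable_on UNIV" using phi unfolding ell2A_def by auto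
  have "0 = inner2 \<psi> (\<lambda>e. \<phi> e - \<psi> e)" using a by simp
  also have "\<dots> = (\<Sum>\<^sub>\<infinity>e. cnj (\<psi> e) * \<phi> e + (- (cnj (\<psi> e) * \<psi> e)))"
    unfolding inner2_def by (simp add: algebra_simps)
  also have "\<dots> = inner2 \<psi> \<phi> + (- inner2 \<psi> \<psi>)"
    unfolding inner2_def
    by (subst infsum_add) (auto intro: l2_prod_summable[OF psis phis]
          summable_on_uminus[THEN iffD2, OF l2_prod_summable(1)[OF psis psis]] simp: infsum_uminus)
  also have "inner2 \<psi> \<phi> = 0" using orth a by simp
  finally have "inner2 \<psi> \<psi> = 0" by simp
  then show "\<psi> = (\<lambda>e. 0)" by (rule inner_self_zero[OF psis])
qed




definition srank :: "(nat \<Rightarrow> real) \<Rightarrow> nat \<Rightarrow> nat" where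
  "srank r v = card {i \<in> Sset r. i < v}"

lemma srank_mono:
  assumes "i \<in> Sset r" "i < v"
  shows "srank r i < srank r v"
proof -
  have "{i' \<in> Sset r. i' < i} \<subset> {i' \<in> Sset r. i' < v}" using assms by auto
  then show ?thesis unfolding srank_def by (rule psubset_card_mono[rotated]) simp
qed

lemma srank_inj:
  assumes "i \<in> Sset r" "j \<in> Sset r" "srank r i = srank r j"
  shows "i = j"
  using srank_mono[of i r j] srank_mono[of j r i] assms by (metis less_irrefl nat_neq_iff)

lemma Kset_down: "k \<in> Kset r \<Longrightarrow> k' \<le> k \<Longrightarrow> k' \<in> Kset r"
  unfolding Kset_def by auto

lemma srank_in_K:
  assumes "v \<in> Sset r"
  shows "srank r v \<in> Kset r"
proof (cases "finite (Sset r)")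
  case True
  have "{i \<in> Sset r. i < v} \<subset> Sset r" using assms by auto
  then have "srank r v < card (Sset r)" unfolding srank_def using True by (rule psubset_card_mono[rotated])
  then show ?thesis unfolding Kset_def by simp
next
  case False then show ?thesis unfolding Kset_def by simp
qed

lemma srank_surj: "k \<in> Kset r \<Longrightarrow> \<exists>v \<in> Sset r. srank r v = k"
proof (induction k)
  case 0
  then have ne: "Sset r \<noteq> {}" unfolding Kset_def by auto
  define v where "v = (LEAST i. i \<in> Sset r)"
  have v: "v \<in> Sset r" using ne unfolding v_def by (metis LeastI ex_in_conv)
  have "{i \<in> Sset r. i < v} = {}" unfolding v_def using not_less_Least by blast
  then show ?case using v unfolding srank_def by auto
next
  case (Suc k)
  then have "k \<in> Kset r" using Kset_down by (metis le_add2 plus_1_eq_Suc)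
  with Suc.IH obtain v where v: "v \<in> Sset r" "srank r v = k" by blast
  have ex: "\<exists>i \<in> Sset r. v < i"
  proof (rule ccontr)
    assume "\<not> ?thesis"
    then have sub: "Sset r = insert v {i \<in> Sset r. i < v}" using v by (auto simp: not_less le_less)
    have f0: "finite {i \<in> Sset r. i < v}" by simp
    have fin: "finite (Sset r)" using f0 finite_insert[of v] sub by metis
    have "card (Sset r) = card (insert v {i \<in> Sset r. i < v})" using arg_cong[of _ _ card, OF sub] .
    also have "\<dots> = Suc (card {i \<in> Sset r. i < v})" by (rule card_insert_disjoint[OF f0]) simp
    finally have "card (Sset r) = Suc k" using v unfolding srank_def by simp
    then show False using Suc.prems fin unfolding Kset_def by simp
  qed
  define w where "w = (LEAST i. i \<in> Sset r \<and> v < i)"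
  obtain i0 where i0: "i0 \<in> Sset r \<and> v < i0" using ex by blast
  have wP: "w \<in> Sset r \<and> v < w" unfolding w_def by (rule LeastI[of _ i0]) (rule i0)
  then have w: "w \<in> Sset r" "v < w" by auto
  have wmin: "\<And>i. i \<in> Sset r \<Longrightarrow> v < i \<Longrightarrow> w \<le> i" unfolding w_def by (simp add: Least_le)
  have "{i \<in> Sset r. i < w} = insert v {i \<in> Sset r. i < v}"
    using w wmin v by (auto simp: not_less) (meson leD less_trans nat_neq_iff)
  then have "srank r w = Suc (srank r v)" unfolding srank_def by simp
  then show ?case using w v by auto
qed

lemma sj_prop:
  assumes "k \<in> Kset r"
  shows "sj r k \<in> Sset r" "srank r (sj r k) = k"
proof -
  obtain v where v: "v \<in> Sset r" "srank r v = k" using srank_surj[OF assms] by blast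
  have "sj r k \<in> Sset r \<and> card {i \<in> Sset r. i < sj r k} = k"
    unfolding sj_def by (rule LeastI[of _ v]) (use v in \<open>simp add: srank_def\<close>)
  then show "sj r k \<in> Sset r" "srank r (sj r k) = k" unfolding srank_def by auto
qed

lemma sj_srank: "v \<in> Sset r \<Longrightarrow> sj r (srank r v) = v"
  using sj_prop[OF srank_in_K] srank_inj by metis

lemma sj_less:
  assumes "k \<in> Kset r" "k' < k"
  shows "sj r k' < sj r k"
proof -
  have k': "k' \<in> Kset r" using assms Kset_down by auto
  show ?thesis
  proof (rule ccontr)
    assume "\<not> ?thesis"
    then have "sj r k \<le> sj r k'" by simp
    then consider "sj r k = sj r k'" | "sj r k < sj r k'" by linarith
    then show False
    proof cases
      case 1 then have "k = k'" using sj_prop(2)[OF assms(1)] sj_prop(2)[OF k'] by metis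
        then show False using assms by simp
    next
      case 2 then show False using srank_mono[OF sj_prop(1)[OF assms(1)] 2] sj_prop[OF assms(1)] sj_prop[OF k'] assms
        by simp
    qed
  qed
qed

lemma sj_ge: "k \<in> Kset r \<Longrightarrow> k \<le> sj r k"
proof (induction k)
  case 0 then show ?case by simp
next
  case (Suc k)
  have "k \<in> Kset r" using Suc.prems Kset_down by (metis le_add2 plus_1_eq_Suc)
  then show ?case using Suc sj_less[OF Suc.prems, of k] by simp
qed

lemma sj_between:
  assumes "k \<in> Kset r" "v \<in> Sset r" "sj r k < v"
  shows "Suc k \<in> Kset r" "sj r (Suc k) \<le> v"
proof -
  have "k < srank r v" using srank_mono[OF sj_prop(1)[OF assms(1)] assms(3)] sj_prop(2)[OF assms(1)] by simp
  then have le: "Suc k \<le> srank r v" by simp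
  show "Suc k \<in> Kset r" using Kset_down[OF srank_in_K[OF assms(2)] le] .
  show "sj r (Suc k) \<le> v"
  proof (cases "Suc k = srank r v")
    case True then show ?thesis using sj_srank[OF assms(2)] by simp
  next
    case False
    then have "Suc k < srank r v" using le by simp
    then show ?thesis using sj_less[OF srank_in_K[OF assms(2)]] sj_srank[OF assms(2)] by (metis less_imp_le)
  qed
qed

lemma eta_cond: "(infinite (Sset r) \<or> Suc k < card (Sset r)) \<longleftrightarrow> Suc k \<in> Kset r"
  unfolding Kset_def by simp




definition ins :: "nat option \<Rightarrow> nat \<Rightarrow> bool" where
  "ins ub v = (case ub of None \<Rightarrow> True | Some t \<Rightarrow> v < t)"

definition F :: "(nat \<Rightarrow> real) \<Rightarrow> (nat \<Rightarrow> real) \<Rightarrow> (nat \<Rightarrow> real) \<Rightarrow> nat \<Rightarrow> nat option \<Rightarrow> nat \<Rightarrow> nat \<Rightarrow> real" where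
  "F p q r j ub u v = (if v = j then
         (if u = j then - sqrt (p j * qt q j / r j)
          else if u = Suc j then sqrt (qt q j) else 0)
       else if j < v \<and> ins ub v then
         (if Suc u = v then - sqrt (p v) else if u = Suc v then sqrt (q v) else 0)
       else if ub = Some v then
         (if Suc u = v then - sqrt (p v) else if u = v then sqrt (p v * q v / r v) else 0)
       else 0)"

definition Aexp :: "(nat \<Rightarrow> real) \<Rightarrow> (nat \<Rightarrow> real) \<Rightarrow> (nat \<Rightarrow> real) \<Rightarrow> (nat \<times> nat \<Rightarrow> complex) \<Rightarrow> nat \<Rightarrow> complex" where
  "Aexp p q r \<psi> j = complex_of_real (sqrt (q j)) * \<psi> (j - 1, j) + complex_of_real (sqrt (r j)) * \<psi> (j, j)
      + complex_of_real (sqrt (p j)) * \<psi> (Suc j, j)"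

definition Bexp :: "(nat \<Rightarrow> real) \<Rightarrow> (nat \<Rightarrow> real) \<Rightarrow> (nat \<Rightarrow> real) \<Rightarrow> (nat \<times> nat \<Rightarrow> complex) \<Rightarrow> nat \<Rightarrow> complex" where
  "Bexp p q r \<psi> j = complex_of_real (sqrt (p j)) * \<psi> (j, Suc j) + complex_of_real (sqrt (r j)) * \<psi> (j, j)
      + complex_of_real (sqrt (q j)) * \<psi> (j, j - 1)"

lemma Bexp_shift: "Bexp p q r \<psi> j = Aexp p q r (shift \<psi>) j"
  unfolding Aexp_def Bexp_def shift_def by (simp add: algebra_simps)

lemma F_supp: "F p q r j ub u v \<noteq> 0 \<Longrightarrow> u = v \<or> u = Suc v \<or> Suc u = v"
  unfolding F_def by (auto split: if_splits)

lemma F_R: "F p q r j ub (Suc v) v = (if v = j then sqrt (qt q j) else if j < v \<and> ins ub v then sqrt (q v) else 0)"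
  unfolding F_def by auto

lemma eta_gen_F: "eta_gen p q r j ub (u, v) = complex_of_real ((-1) ^ v * Qc p q v * F p q r j ub u v)"
  unfolding eta_gen_def F_def ins_def by simp

locale walk =
  fixes p q r :: "nat \<Rightarrow> real"
  assumes nonneg: "\<And>j. p j \<ge> 0 \<and> q j \<ge> 0 \<and> r j \<ge> 0"
    and q0: "q 0 = 0"
    and ppos: "\<And>j. p j > 0"
    and qpos: "\<And>j. j \<ge> 1 \<Longrightarrow> q j > 0"
begin

lemma qt_pos: "qt q j > 0"
  unfolding qt_def using qpos by auto

lemma prodq_pos: "(\<Prod>i=1..v. q i) > 0"
  by (rule prod_pos) (use qpos in auto)

lemma prodp_pos: "(\<Prod>i=1..v. p i) > 0"
  by (rule prod_pos) (use ppos in auto)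

lemma Qc_pos: "Qc p q v > 0"
  unfolding Qc_def using prodq_pos prodp_pos qpos[of v]
  by (auto intro!: divide_pos_pos mult_pos_pos)

lemma Qc_qt: "Qc p q v * sqrt (qt q v) = sqrt ((\<Prod>i=1..v. q i) / (\<Prod>i=1..v. p i))"
proof (cases "v = 0")
  case True then show ?thesis by (simp add: Qc_def qt_def)
next
  case False
  then have qv: "q v > 0" using qpos by simp
  have "Qc p q v * sqrt (qt q v) = sqrt ((\<Prod>i=1..v. q i) / ((\<Prod>i=1..v. p i) * q v)) * sqrt (q v)"
    using False by (simp add: Qc_def qt_def)
  also have "\<dots> = sqrt ((\<Prod>i=1..v. q i) / ((\<Prod>i=1..v. p i) * q v) * q v)"
    by (rule real_sqrt_mult[symmetric])
  also have "\<dots> = sqrt ((\<Prod>i=1..v. q i) / (\<Prod>i=1..v. p i))"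
    using qv by simp
  finally show ?thesis .
qed

lemma Qc_p: "Qc p q (Suc v) * sqrt (p (Suc v)) = sqrt ((\<Prod>i=1..v. q i) / (\<Prod>i=1..v. p i))"
proof -
  have pv: "p (Suc v) > 0" "q (Suc v) > 0" using ppos qpos by auto
  have "Qc p q (Suc v) * sqrt (p (Suc v)) =
      sqrt ((\<Prod>i=1..v. q i) * q (Suc v) / ((\<Prod>i=1..v. p i) * p (Suc v) * q (Suc v)) * p (Suc v))"
    by (simp add: Qc_def real_sqrt_mult prod.cl_ivl_Suc)
  also have "\<dots> = sqrt ((\<Prod>i=1..v. q i) / (\<Prod>i=1..v. p i))"
    using pv by (simp add: field_simps)
  finally show ?thesis .
qed

lemma Q_id: "Qc p q v * sqrt (qt q v) = Qc p q (Suc v) * sqrt (p (Suc v))"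
  using Qc_qt Qc_p by simp

lemma sqrt_div_cancel: "a > 0 \<Longrightarrow> x \<ge> 0 \<Longrightarrow> sqrt a * sqrt (x / a) = sqrt x"
  by (simp add: real_sqrt_mult[symmetric])

lemma F_A:
  assumes rj: "r j > 0" and ub: "\<And>t. ub = Some t \<Longrightarrow> j < t \<and> r t > 0"
  shows "sqrt (q v) * F p q r j ub (v - 1) v + sqrt (r v) * F p q r j ub v v
         + sqrt (p v) * F p q r j ub (Suc v) v = 0"
proof -
  consider (a) "v = j" | (b) "v \<noteq> j" "j < v \<and> ins ub v" | (c) "v \<noteq> j" "\<not> (j < v \<and> ins ub v)" "ub = Some v"
    | (d) "v \<noteq> j" "\<not> (j < v \<and> ins ub v)" "ub \<noteq> Some v" by blast
  then show ?thesis
  proof cases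
    case a
    have t1: "sqrt (q v) * F p q r j ub (v - 1) v = 0"
    proof (cases "v = 0")
      case True then show ?thesis using q0 by simp
    next
      case False then show ?thesis using a by (auto simp: F_def)
    qed
    have "sqrt (r j) * sqrt (p j * qt q j / r j) = sqrt (p j) * sqrt (qt q j)"
      using sqrt_div_cancel[OF rj, of "p j * qt q j"] nonneg[of j] qt_pos[of j]
      by (simp add: real_sqrt_mult)
    then show ?thesis using t1 a by (simp add: F_def ins_def)
  next
    case b
    then have v1: "v \<ge> 1" by simp
    have "F p q r j ub (v - 1) v = - sqrt (p v)" using b v1 by (simp add: F_def ins_def)
    moreover have "F p q r j ub v v = 0" using b by (simp add: F_def ins_def)
    moreover have "F p q r j ub (Suc v) v = sqrt (q v)" using b by (simp add: F_def ins_def)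
    ultimately show ?thesis by simp
  next
    case c
    then have v1: "v \<ge> 1" "r v > 0" using ub[of v] by auto
    have "F p q r j ub (v - 1) v = - sqrt (p v)" using c v1 by (simp add: F_def ins_def)
    moreover have "F p q r j ub v v = sqrt (p v * q v / r v)" using c by (simp add: F_def ins_def)
    moreover have "F p q r j ub (Suc v) v = 0" using c by (simp add: F_def ins_def)
    moreover have "sqrt (r v) * sqrt (p v * q v / r v) = sqrt (p v) * sqrt (q v)"
      using sqrt_div_cancel[OF v1(2), of "p v * q v"] nonneg[of v]
      by (simp add: real_sqrt_mult)
    ultimately show ?thesis by simp
  next
    case d
    then show ?thesis by (auto simp: F_def ins_def)
  qed
qed

lemma F_sym:
  assumes ub: "\<And>t. ub = Some t \<Longrightarrow> j < t"
  shows "(-1) ^ v * Qc p q v * F p q r j ub (Suc v) v = (-1) ^ (Suc v) * Qc p q (Suc v) * F p q r j ub v (Suc v)"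
proof -
  consider (a) "v = j" | (b) "v \<noteq> j" "j < v \<and> ins ub v" | (c) "v \<noteq> j" "\<not> (j < v \<and> ins ub v)"
    by blast
  then show ?thesis
  proof cases
    case a
    have "F p q r j ub v (Suc v) = - sqrt (p (Suc v))"
    proof (cases "ins ub (Suc v)")
      case True then show ?thesis using a by (simp add: F_def ins_def)
    next
      case False
      then obtain t where "ub = Some t" "t \<le> Suc v" unfolding ins_def by (auto split: option.splits)
      moreover then have "j < t" using ub by simp
      ultimately have "ub = Some (Suc v)" using a by simp
      then show ?thesis using a False by (simp add: F_def ins_def)
    qed
    then show ?thesis using a Q_id[of v] by (simp add: F_def ins_def)
  next
    case b
    then have v1: "v \<ge> 1" by simp
    have "F p q r j ub v (Suc v) = - sqrt (p (Suc v))"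
    proof (cases "ins ub (Suc v)")
      case True then show ?thesis using b by (simp add: F_def ins_def)
    next
      case False
      then obtain t where "ub = Some t" "t \<le> Suc v" unfolding ins_def by (auto split: option.splits)
      moreover have "v < t" using b \<open>ub = Some t\<close> unfolding ins_def by simp
      ultimately have "ub = Some (Suc v)" by simp
      then show ?thesis using b False by (simp add: F_def ins_def)
    qed
    moreover have "F p q r j ub (Suc v) v = sqrt (q v)" using b by (simp add: F_def ins_def)
    moreover have "qt q v = q v" using v1 by (simp add: qt_def)
    ultimately show ?thesis using Q_id[of v] by simp
  next
    case c
    have "F p q r j ub v (Suc v) = 0"
    proof -
      have "Suc v \<noteq> j \<Longrightarrow> \<not> (j < Suc v \<and> ins ub (Suc v))"
        using c unfolding ins_def by (auto split: option.splits)
      moreover have "ub \<noteq> Some (Suc v)"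
        using c ub[of "Suc v"] unfolding ins_def by auto
      ultimately show ?thesis by (auto simp: F_def)
    qed
    moreover have "F p q r j ub (Suc v) v = 0" using c by (auto simp: F_def ins_def)
    ultimately show ?thesis by simp
  qed
qed

lemma F_supp2:
  assumes rj: "r j > 0" and ub: "\<And>t. ub = Some t \<Longrightarrow> j < t \<and> r t > 0"
    and nz: "F p q r j ub u v \<noteq> 0"
  shows "j \<le> v" "u = v \<Longrightarrow> r v > 0"
proof -
  show "j \<le> v" using nz ub unfolding F_def by (auto split: if_splits)
  show "u = v \<Longrightarrow> r v > 0" using nz ub rj unfolding F_def by (auto split: if_splits)
qed

lemma eta_sym:
  assumes ub: "\<And>t. ub = Some t \<Longrightarrow> j < t"
  shows "eta_gen p q r j ub (u, v) = eta_gen p q r j ub (v, u)"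
proof -
  consider "u = v" | "u = Suc v" | "v = Suc u" | "u \<noteq> v" "u \<noteq> Suc v" "v \<noteq> Suc u" by blast
  then show ?thesis
  proof cases
    case 2 then show ?thesis unfolding eta_gen_F using F_sym[where v=v, OF ub] by (simp del: power_Suc)
  next
    case 3 then show ?thesis unfolding eta_gen_F using F_sym[where v=u, OF ub] by (simp del: power_Suc)
  next
    case 4
    then have "F p q r j ub u v = 0" "F p q r j ub v u = 0" using F_supp by blast+
    then show ?thesis unfolding eta_gen_F by simp
  qed simp
qed

lemma eta_shift:
  assumes ub: "\<And>t. ub = Some t \<Longrightarrow> j < t"
  shows "shift (eta_gen p q r j ub) = eta_gen p q r j ub"
  unfolding shift_def using eta_sym[OF ub] by auto

lemma eta_A:
  assumes rj: "r j > 0" and ub: "\<And>t. ub = Some t \<Longrightarrow> j < t \<and> r t > 0"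
  shows "Aexp p q r (eta_gen p q r j ub) v = 0"
proof -
  have "Aexp p q r (eta_gen p q r j ub) v = complex_of_real ((-1) ^ v * Qc p q v *
     (sqrt (q v) * F p q r j ub (v - 1) v + sqrt (r v) * F p q r j ub v v
         + sqrt (p v) * F p q r j ub (Suc v) v))"
    unfolding Aexp_def eta_gen_F by (simp add: algebra_simps)
  also have "\<dots> = 0"
    by (simp only: F_A[where j=j and ub=ub and v=v, OF rj ub] mult_zero_right of_real_0)
  finally show ?thesis .
qed

lemma eta_B:
  assumes rj: "r j > 0" and ub: "\<And>t. ub = Some t \<Longrightarrow> j < t \<and> r t > 0"
  shows "Bexp p q r (eta_gen p q r j ub) v = 0"
  using eta_A[OF rj ub] eta_shift[of ub j] ub by (simp add: Bexp_shift)

end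




context walk begin

lemma avec_vals:
  "avec p q r j (Suc j, j) = complex_of_real (sqrt (p j))"
  "avec p q r j (j, j) = complex_of_real (sqrt (r j))"
  "j \<ge> 1 \<Longrightarrow> avec p q r j (j - 1, j) = complex_of_real (sqrt (q j))"
  "avec p q r j e \<noteq> 0 \<Longrightarrow> e \<in> {(Suc j, j), (j, j), (j - 1, j)}"
proof -
  show "avec p q r j (Suc j, j) = complex_of_real (sqrt (p j))" by (simp add: avec_def)
  show "avec p q r j (j, j) = complex_of_real (sqrt (r j))"
    using nonneg[of j] by (auto simp: avec_def)
  show "j \<ge> 1 \<Longrightarrow> avec p q r j (j - 1, j) = complex_of_real (sqrt (q j))"
    by (auto simp: avec_def)
  show "avec p q r j e \<noteq> 0 \<Longrightarrow> e \<in> {(Suc j, j), (j, j), (j - 1, j)}"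
    by (cases e) (auto simp: avec_def split: if_splits)
qed

lemma inner_avec: "inner2 (avec p q r j) \<phi> = Aexp p q r \<phi> j"
proof -
  define G where "G = {(Suc j, j), (j, j), (j - 1, j)}"
  have "inner2 (avec p q r j) \<phi> = (\<Sum>e\<in>G. cnj (avec p q r j e) * \<phi> e)"
    unfolding inner2_def by (rule fs_infsum) (use avec_vals(4) in \<open>auto simp: G_def\<close>)
  also have "\<dots> = Aexp p q r \<phi> j"
  proof (cases j)
    case 0
    then have "G = {(Suc 0, 0), (0, 0)}" unfolding G_def by auto
    then show ?thesis using 0 avec_vals(1,2)[of 0] q0 by (simp add: Aexp_def)
  next
    case (Suc m)
    then have "G = {(Suc j, j), (j, j), (m, j)}" unfolding G_def by auto
    then show ?thesis using Suc avec_vals(1,2)[of j] avec_vals(3)[of j]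
      by (simp add: Aexp_def algebra_simps)
  qed
  finally show ?thesis .
qed

lemma inner_bvec: "inner2 (bvec p q r j) \<phi> = Bexp p q r \<phi> j"
proof -
  have bv: "bvec p q r j (u, v) = avec p q r j (v, u)" for u v
    by (simp add: bvec_def shift_def)
  define G where "G = {(j, Suc j), (j, j), (j, j - 1)}"
  have "inner2 (bvec p q r j) \<phi> = (\<Sum>e\<in>G. cnj (bvec p q r j e) * \<phi> e)"
    unfolding inner2_def
  proof (rule fs_infsum)
    fix e assume "e \<notin> G"
    then show "cnj (bvec p q r j e) * \<phi> e = 0"
      using avec_vals(4)[of j "(snd e, fst e)"] bv[of "fst e" "snd e"] by (cases e) (auto simp: G_def)
  qed (simp add: G_def)
  also have "\<dots> = Bexp p q r \<phi> j"
  proof (cases j)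
    case 0
    then have "G = {(0, Suc 0), (0, 0)}" unfolding G_def by auto
    then show ?thesis using 0 avec_vals(1,2)[of 0] q0 bv by (simp add: Bexp_def)
  next
    case (Suc m)
    then have "G = {(j, Suc j), (j, j), (j, m)}" unfolding G_def by auto
    then show ?thesis using Suc avec_vals(1,2)[of j] avec_vals(3)[of j] bv
      by (simp add: Bexp_def algebra_simps)
  qed
  finally show ?thesis .
qed

lemma supp_avec: "finite (supp (avec p q r j))"
proof -
  have "supp (avec p q r j) \<subseteq> {(Suc j, j), (j, j), (j - 1, j)}"
    using avec_vals(4)[of j] unfolding supp_def by auto
  then show ?thesis by (rule finite_subset) simp
qed

lemma supp_bvec: "finite (supp (bvec p q r j))"
proof -
  have "supp (bvec p q r j) \<subseteq> {(j, Suc j), (j, j), (j, j - 1)}"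
    using avec_vals(4)[of j] unfolding supp_def bvec_def shift_def by auto
  then show ?thesis by (rule finite_subset) simp
qed

lemma self_in_cspan:
  assumes "x \<in> X" "finite (supp x)" "\<And>e. e \<notin> arcs r \<Longrightarrow> x e = 0"
  shows "x \<in> cspan r X"
proof -
  have "x \<in> finspan X" unfolding finspan_def
    by (rule CollectI, rule exI[of _ "{x}"], rule exI[of _ "\<lambda>_. 1"]) (use assms in auto)
  moreover have "x \<in> ell2A r" unfolding ell2A_def
    using assms supp_summable(3)[OF assms(2)] by auto
  ultimately show ?thesis unfolding cspan_def norm2_def
    by (intro CollectI conjI allI impI bexI[of _ x]) auto
qed

lemma avec_arcs: "e \<notin> arcs r \<Longrightarrow> avec p q r j e = 0"
  by (cases e) (auto simp: arcs_iff avec_def)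

lemma bvec_arcs: "e \<notin> arcs r \<Longrightarrow> bvec p q r j e = 0"
  by (cases e) (auto simp: arcs_iff avec_def bvec_def shift_def)

lemma uniq:
  assumes A: "\<And>j. Aexp p q r \<psi> j = 0" and B: "\<And>j. Bexp p q r \<psi> j = 0"
    and off: "\<And>e. e \<notin> arcs r \<Longrightarrow> \<psi> e = 0"
    and R: "\<And>v. r v > 0 \<Longrightarrow> \<psi> (Suc v, v) = 0"
  shows "\<psi> e = 0"
proof -
  have main: "\<psi> (Suc v, v) = 0 \<and> \<psi> (v, v) = 0 \<and> \<psi> (v, Suc v) = 0" for v
  proof (induction v rule: less_induct)
    case (less v)
    have L: "complex_of_real (sqrt (q v)) * \<psi> (v - 1, v) = 0"
    proof (cases v)
      case 0 then show ?thesis using q0 by simp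
    next
      case (Suc w) then show ?thesis using less[of w] by simp
    qed
    have L': "complex_of_real (sqrt (q v)) * \<psi> (v, v - 1) = 0"
    proof (cases v)
      case 0 then show ?thesis using q0 by simp
    next
      case (Suc w) then show ?thesis using less[of w] by simp
    qed
    have a: "complex_of_real (sqrt (r v)) * \<psi> (v, v) + complex_of_real (sqrt (p v)) * \<psi> (Suc v, v) = 0"
      using A[of v] unfolding Aexp_def L by simp
    have pv: "complex_of_real (sqrt (p v)) \<noteq> 0" using ppos[of v] by simp
    have RO: "\<psi> (Suc v, v) = 0 \<and> \<psi> (v, v) = 0"
    proof (cases "r v > 0")
      case True
      then have "\<psi> (Suc v, v) = 0" using R by simp
      moreover have "complex_of_real (sqrt (r v)) \<noteq> 0" using True by simp
      ultimately show ?thesis using a by simp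
    next
      case False
      then have "\<psi> (v, v) = 0" using off by (simp add: arcs_iff)
      then show ?thesis using a pv by simp
    qed
    have "complex_of_real (sqrt (p v)) * \<psi> (v, Suc v) = 0"
      using B[of v] RO unfolding Bexp_def L' by simp
    then show ?case using RO pv by simp
  qed
  obtain a b where e: "e = (a, b)" by (cases e)
  consider "a = Suc b" | "Suc a = b" | "a = b" | "e \<notin> arcs r" using e by (auto simp: arcs_iff)
  then show ?thesis
  proof cases
    case 1 then show ?thesis using main[of b] e by simp
  next
    case 2 then show ?thesis using main[of a] e by auto
  next
    case 3 then show ?thesis using main[of b] e by simp
  qed (use off in simp)
qed

end




definition ubk :: "(nat \<Rightarrow> real) \<Rightarrow> nat \<Rightarrow> nat option" where
  "ubk r k = (if Suc k \<in> Kset r then Some (sj r (Suc k)) else None)"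

lemma eta_unf: "eta p q r k = eta_gen p q r (sj r k) (ubk r k)"
  unfolding eta_def ubk_def eta_cond by simp

lemma Aexp_lin: "Aexp p q r (\<lambda>e. \<Sum>k\<in>B. c k * f k e) j = (\<Sum>k\<in>B. c k * Aexp p q r (f k) j)"
  by (simp add: Aexp_def sum.distrib sum_distrib_left algebra_simps)

lemma Bexp_lin: "Bexp p q r (\<lambda>e. \<Sum>k\<in>B. c k * f k e) j = (\<Sum>k\<in>B. c k * Bexp p q r (f k) j)"
  by (simp add: Bexp_def sum.distrib sum_distrib_left algebra_simps)

context walk begin

lemma eta_hyp:
  assumes k: "k \<in> Kset r"
  shows "r (sj r k) > 0" "\<And>t. ubk r k = Some t \<Longrightarrow> sj r k < t \<and> r t > 0"
proof -
  show "r (sj r k) > 0" using sj_prop(1)[OF k] by (simp add: Sset_def)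
  fix t assume "ubk r k = Some t"
  then have "Suc k \<in> Kset r" "t = sj r (Suc k)" by (auto simp: ubk_def split: if_splits)
  then show "sj r k < t \<and> r t > 0" using sj_less[of "Suc k" r k] sj_prop(1)[of "Suc k" r]
    by (simp add: Sset_def)
qed

lemma eta_AB:
  assumes k: "k \<in> Kset r"
  shows "Aexp p q r (eta p q r k) v = 0" "Bexp p q r (eta p q r k) v = 0"
  unfolding eta_unf using eta_A[OF eta_hyp[OF k]] eta_B[OF eta_hyp[OF k]] by auto

lemma eta_shift_k:
  assumes k: "k \<in> Kset r"
  shows "shift (eta p q r k) = eta p q r k"
  unfolding eta_unf using eta_shift[of "ubk r k" "sj r k"] eta_hyp(2)[OF k] by auto

lemma eta_nz:
  assumes k: "k \<in> Kset r" and nz: "eta p q r k (u, v) \<noteq> 0"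
  shows "k \<le> v" "(u, v) \<in> arcs r"
proof -
  have F: "F p q r (sj r k) (ubk r k) u v \<noteq> 0" using nz unfolding eta_unf eta_gen_F by auto
  have "sj r k \<le> v" using F_supp2(1)[OF eta_hyp[OF k] F] .
  then show "k \<le> v" using sj_ge[OF k] by simp
  show "(u, v) \<in> arcs r" using F_supp[OF F] F_supp2(2)[OF eta_hyp[OF k] F] by (auto simp: arcs_iff)
qed

lemma eta_R:
  assumes k: "k \<in> Kset r" and v: "v \<in> Sset r"
  shows "eta p q r k (Suc v, v) =
    (if k = srank r v then complex_of_real ((-1) ^ v * Qc p q v * sqrt (qt q v)) else 0)"
proof (cases "k = srank r v")
  case True
  then have "sj r k = v" using sj_srank[OF v] by simp
  then show ?thesis using True unfolding eta_unf eta_gen_F F_R by simp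
next
  case False
  then have ne: "sj r k \<noteq> v" using sj_prop(2)[OF k] by auto
  have "\<not> (sj r k < v \<and> ins (ubk r k) v)"
  proof
    assume a: "sj r k < v \<and> ins (ubk r k) v"
    then have "Suc k \<in> Kset r" "sj r (Suc k) \<le> v" using sj_between[OF k v] by auto
    then show False using a by (simp add: ins_def ubk_def)
  qed
  then show ?thesis using False ne unfolding eta_unf eta_gen_F F_R by auto
qed

lemma eta_zero_above: "k \<in> Kset r \<Longrightarrow> \<not> k \<le> snd e \<Longrightarrow> c k * eta p q r k e = 0"
  using eta_nz(1)[of k "fst e" "snd e"] by (cases e) force

lemma hs_fin:
  "((\<lambda>k. c k * eta p q r k e) has_sum (\<Sum>k\<in>{k \<in> Kset r. k \<le> snd e}. c k * eta p q r k e)) (Kset r)"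
proof (rule has_sum_finite_neutralI)
  fix k assume "k \<in> Kset r - {k \<in> Kset r. k \<le> snd e}"
  then show "c k * eta p q r k e = 0" using eta_zero_above[of k e c] by blast
qed auto

lemma sum_M:
  assumes "snd e \<le> M"
  shows "(\<Sum>k\<in>{k \<in> Kset r. k \<le> snd e}. c k * eta p q r k e) = (\<Sum>k\<in>{k \<in> Kset r. k \<le> M}. c k * eta p q r k e)"
proof (rule sum.mono_neutral_left)
  show "\<forall>k\<in>{k \<in> Kset r. k \<le> M} - {k \<in> Kset r. k \<le> snd e}. c k * eta p q r k e = 0"
    using eta_zero_above[of _ e c] by blast
qed (use assms in auto)

lemma loc:
  assumes hs: "\<And>e. ((\<lambda>k. c k * eta p q r k e) has_sum \<phi> e) (Kset r)"
  shows "\<And>e M. snd e \<le> M \<Longrightarrow> \<phi> e = (\<Sum>k\<in>{k \<in> Kset r. k \<le> M}. c k * eta p q r k e)"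
    and "\<And>j. Aexp p q r \<phi> j = 0" and "\<And>j. Bexp p q r \<phi> j = 0"
    and "\<And>e. e \<notin> arcs r \<Longrightarrow> \<phi> e = 0"
proof -
  show val: "\<phi> e = (\<Sum>k\<in>{k \<in> Kset r. k \<le> M}. c k * eta p q r k e)" if "snd e \<le> M" for e M
    using has_sum_unique[OF hs hs_fin] sum_M[OF that] by simp
  fix j
  define BM where "BM = {k \<in> Kset r. k \<le> Suc j}"
  let ?f = "\<lambda>e. \<Sum>k\<in>BM. c k * eta p q r k e"
  have "Aexp p q r \<phi> j = Aexp p q r ?f j"
    unfolding Aexp_def BM_def using val[of "(j - 1, j)" "Suc j"] val[of "(j, j)" "Suc j"] val[of "(Suc j, j)" "Suc j"]
    by simp
  also have "\<dots> = 0" unfolding Aexp_lin using eta_AB(1) by (simp add: BM_def)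
  finally show "Aexp p q r \<phi> j = 0" .
  have "Bexp p q r \<phi> j = Bexp p q r ?f j"
    unfolding Bexp_def BM_def using val[of "(j, j - 1)" "Suc j"] val[of "(j, j)" "Suc j"] val[of "(j, Suc j)" "Suc j"]
    by simp
  also have "\<dots> = 0" unfolding Bexp_lin using eta_AB(2) by (simp add: BM_def)
  finally show "Bexp p q r \<phi> j = 0" .
next
  fix e assume e: "e \<notin> arcs r"
  have "\<phi> e = (\<Sum>k\<in>{k \<in> Kset r. k \<le> snd e}. c k * eta p q r k e)"
    using has_sum_unique[OF hs hs_fin] by simp
  also have "\<dots> = 0"
    by (rule sum.neutral) (use e eta_nz(2)[of _ "fst e" "snd e"] in \<open>cases e, auto\<close>)
  finally show "\<phi> e = 0" .
qed

end




lemma Aexp_diff: "Aexp p q r (\<lambda>e. f e - g e) j = Aexp p q r f j - Aexp p q r g j"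
  by (simp add: Aexp_def algebra_simps)

lemma Bexp_diff: "Bexp p q r (\<lambda>e. f e - g e) j = Bexp p q r f j - Bexp p q r g j"
  by (simp add: Bexp_def algebra_simps)

theorem lemma3:
  fixes p q r :: "nat \<Rightarrow> real"
  assumes nonneg: "\<And>j. p j \<ge> 0 \<and> q j \<ge> 0 \<and> r j \<ge> 0"
    and sum1: "\<And>j. p j + q j + r j = 1"
    and q0: "q 0 = 0"
    and ppos: "\<And>j. p j > 0"
    and qpos: "\<And>j. j \<ge> 1 \<Longrightarrow> q j > 0"
  shows "(\<forall>\<phi> \<in> ell2A r. \<phi> \<in> HS p q r \<longleftrightarrow>
            (\<exists>c :: nat \<Rightarrow> complex. \<forall>e. ((\<lambda>k. c k * eta p q r k e) has_sum \<phi> e) (Kset r)))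
       \<and> (Sset r = {} \<longrightarrow> HS p q r = {(\<lambda>e. 0)})
       \<and> (\<forall>k \<in> Kset r. eta p q r k \<in> ell2A r \<longrightarrow> Uop p q r (eta p q r k) = (\<lambda>e. - eta p q r k e))"
proof -
  interpret W: walk p q r by unfold_locales (use nonneg q0 ppos qpos in auto)
  have avHR: "avec p q r j \<in> HR p q r" for j
    unfolding HR_def by (rule W.self_in_cspan) (auto intro: W.supp_avec W.avec_arcs)
  have bvHR: "bvec p q r j \<in> HR p q r" for j
    unfolding HR_def by (rule W.self_in_cspan) (auto intro: W.supp_bvec W.bvec_arcs)
  have toHS: "\<phi> \<in> HS p q r" if phi: "\<phi> \<in> ell2A r" and AB: "\<And>j. Aexp p q r \<phi> j = 0" "\<And>j. Bexp p q r \<phi> j = 0" for \<phi>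
  proof -
    have "inner2 \<psi> \<phi> = 0" if "\<psi> \<in> HR p q r" for \<psi>
      using that unfolding HR_def
    proof (rule cspan_orth[OF phi, rotated])
      fix x assume "x \<in> range (avec p q r) \<union> range (bvec p q r)"
      then show "finite (supp x) \<and> inner2 x \<phi> = 0"
        using W.supp_avec W.supp_bvec W.inner_avec W.inner_bvec AB by auto
    qed
    then show ?thesis using phi unfolding HS_def orth_def by auto
  qed
  have P1: "\<forall>\<phi> \<in> ell2A r. \<phi> \<in> HS p q r \<longleftrightarrow>
            (\<exists>c :: nat \<Rightarrow> complex. \<forall>e. ((\<lambda>k. c k * eta p q r k e) has_sum \<phi> e) (Kset r))"
  proof (intro ballI iffI)
    fix \<phi> assume phi: "\<phi> \<in> ell2A r" and hs: "\<phi> \<in> HS p q r"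
    have orth: "\<And>\<psi>. \<psi> \<in> HR p q r \<Longrightarrow> inner2 \<psi> \<phi> = 0" using hs unfolding HS_def orth_def by auto
    have A: "Aexp p q r \<phi> j = 0" for j using orth[OF avHR[of j]] W.inner_avec by simp
    have B: "Bexp p q r \<phi> j = 0" for j using orth[OF bvHR[of j]] W.inner_bvec by simp
    define w where "w v = complex_of_real ((-1) ^ v * Qc p q v * sqrt (qt q v))" for v
    have wnz: "w v \<noteq> 0" for v using W.Qc_pos[of v] W.qt_pos[of v] unfolding w_def by simp
    define c where "c k = \<phi> (Suc (sj r k), sj r k) / w (sj r k)" for k
    define \<Phi> where "\<Phi> e = (\<Sum>k\<in>{k \<in> Kset r. k \<le> snd e}. c k * eta p q r k e)" for e
    have hsP: "((\<lambda>k. c k * eta p q r k e) has_sum \<Phi> e) (Kset r)" for e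
      unfolding \<Phi>_def by (rule W.hs_fin)
    note L = W.loc[OF hsP]
    define \<psi> where "\<psi> e = \<phi> e - \<Phi> e" for e
    have z: "\<psi> e = 0" for e
    proof (rule W.uniq)
      fix j
      show "Aexp p q r \<psi> j = 0" unfolding \<psi>_def[abs_def] Aexp_diff using A L(2) by simp
      show "Bexp p q r \<psi> j = 0" unfolding \<psi>_def[abs_def] Bexp_diff using B L(3) by simp
    next
      fix e assume e: "e \<notin> arcs r"
      have "\<phi> e = 0" using phi e unfolding ell2A_def by blast
      moreover have "\<Phi> e = 0" using L(4)[OF e] .
      ultimately show "\<psi> e = 0" unfolding \<psi>_def by simp
    next
      fix v assume rv: "r v > 0"
      then have v: "v \<in> Sset r" by (simp add: Sset_def)
      define k0 where "k0 = srank r v"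
      have k0: "k0 \<in> Kset r" "sj r k0 = v" unfolding k0_def using srank_in_K[OF v] sj_srank[OF v] by auto
      have "k0 \<le> v" using sj_ge[OF k0(1)] k0(2) by simp
      have "\<Phi> (Suc v, v) = (\<Sum>k\<in>{k \<in> Kset r. k \<le> v}. (if k = k0 then c k * w v else 0))"
        unfolding \<Phi>_def using W.eta_R[OF _ v] by (intro sum.cong) (auto simp: w_def k0_def)
      also have "\<dots> = c k0 * w v" using k0 \<open>k0 \<le> v\<close> by (simp add: sum.delta)
      also have "\<dots> = \<phi> (Suc v, v)" using wnz k0 unfolding c_def by simp
      finally show "\<psi> (Suc v, v) = 0" unfolding \<psi>_def by simp
    qed
    show "\<exists>c :: nat \<Rightarrow> complex. \<forall>e. ((\<lambda>k. c k * eta p q r k e) has_sum \<phi> e) (Kset r)"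
      using hsP z unfolding \<psi>_def by (intro exI[of _ c]) (metis eq_iff_diff_eq_0)
  next
    fix \<phi> assume phi: "\<phi> \<in> ell2A r"
      and ex: "\<exists>c :: nat \<Rightarrow> complex. \<forall>e. ((\<lambda>k. c k * eta p q r k e) has_sum \<phi> e) (Kset r)"
    then obtain c where c: "\<And>e. ((\<lambda>k. c k * eta p q r k e) has_sum \<phi> e) (Kset r)" by blast
    show "\<phi> \<in> HS p q r" by (rule toHS[OF phi W.loc(2)[OF c] W.loc(3)[OF c]])
  qed
  have P2: "Sset r = {} \<longrightarrow> HS p q r = {(\<lambda>e. 0)}"
  proof
    assume S: "Sset r = {}"
    then have K: "Kset r = {}" unfolding Kset_def by simp
    have z0: "(\<lambda>e. 0::complex) \<in> ell2A r" unfolding ell2A_def by simp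
    show "HS p q r = {(\<lambda>e. 0)}"
    proof
      show "HS p q r \<subseteq> {(\<lambda>e. 0)}"
      proof
        fix \<phi> assume hs: "\<phi> \<in> HS p q r"
        then have phi: "\<phi> \<in> ell2A r" unfolding HS_def orth_def by auto
        obtain c where "\<And>e. ((\<lambda>k. c k * eta p q r k e) has_sum \<phi> e) (Kset r)"
          using P1 phi hs by blast
        then have "\<phi> e = 0" for e using K has_sum_unique has_sum_empty by metis
        then show "\<phi> \<in> {(\<lambda>e. 0)}" by auto
      qed
      show "{(\<lambda>e. 0)} \<subseteq> HS p q r"
        using P1 z0 K by auto
    qed
  qed
  have P3: "\<forall>k \<in> Kset r. eta p q r k \<in> ell2A r \<longrightarrow> Uop p q r (eta p q r k) = (\<lambda>e. - eta p q r k e)"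
  proof (intro ballI impI)
    fix k assume k: "k \<in> Kset r" and el: "eta p q r k \<in> ell2A r"
    have orthA: "inner2 g (eta p q r k) = 0" if "g \<in> cspan r (range (avec p q r))" for g
      using that
    proof (rule cspan_orth[OF el, rotated])
      fix x assume "x \<in> range (avec p q r)"
      then show "finite (supp x) \<and> inner2 x (eta p q r k) = 0"
        using W.supp_avec W.inner_avec W.eta_AB(1)[OF k] by auto
    qed
    have pz: "proj r (range (avec p q r)) (eta p q r k) = (\<lambda>e. 0)"
      by (rule proj_zero[OF el orthA])
    have sym: "eta p q r k (v, u) = eta p q r k (u, v)" for u v
      using fun_cong[OF W.eta_shift_k[OF k], of "(u, v)"] by (simp add: shift_def)
    show "Uop p q r (eta p q r k) = (\<lambda>e. - eta p q r k e)"
      unfolding Uop_def pz shift_def by (rule ext) (auto simp: sym)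
  qed
  show ?thesis using P1 P2 P3 by blast
qed


end
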